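(* Let $n\ge 3$, let $K_n$ be the complete graph on $n$ vertices, and let $H(d,q)$ be the Hamming graph with $d\ge 1$ and $q\ge 3$. Let the distinct adjacency eigenvalues of $H(d,q)$ be $\lambda_i=d(q-1)-qi$ for $i=0,1,\ldots,d$, and its distinct distance eigenvalues be $\mu_0=t=dq^{d-1}(q-1)$, $\mu_1=-q^{d-1}$, $\mu_2=0$. Then the distance eigenvalues of $K_n\otimes H(d,q)$ are $2n-2+nt+\lambda_0$, $2n-2-nq^{d-1}+\lambda_1$, $2n-2+\lambda_i$ for $i=2,3,\ldots,d$, and $\lambda_i-2$ for $i=0,1,\ldots,d$.
   Context: The Hamming graph $H(d,q)$ has as vertices all ordered $d$-tuples over a $q$-element set, two vertices being adjacent if and only if they differ in exactly one coordinate. The Kronecker product $G\otimes H$ of simple graphs $G,H$ has vertex set $V(G)\times V(H)$, with $(x,y)$ adjacent to $(u,v)$ if and only if $xu\in E(G)$ and $yv\in E(H)$. Distance eigenvalues are the eigenvalues of the distance matrix, whose $(u,v)$ entry is the length of a shortest $u$–$v$ path. *)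

theory Defs
  imports Complex_Main
begin

text \<open>A simple graph is given by a finite vertex set V and a symmetric irreflexive
adjacency relation adj (only its restriction to V matters).\<close>

definition has_walk :: "'a set \<Rightarrow> ('a \<Rightarrow> 'a \<Rightarrow> bool) \<Rightarrow> 'a \<Rightarrow> 'a \<Rightarrow> nat \<Rightarrow> bool" where
  "has_walk V adj u v k \<longleftrightarrow>
     (\<exists>p :: nat \<Rightarrow> 'a. p 0 = u \<and> p k = v \<and> (\<forall>i\<le>k. p i \<in> V) \<and>
        (\<forall>i<k. adj (p i) (p (Suc i))))"

definition graph_dist :: "'a set \<Rightarrow> ('a \<Rightarrow> 'a \<Rightarrow> bool) \<Rightarrow> 'a \<Rightarrow> 'a \<Rightarrow> nat" where
  "graph_dist V adj u v = (LEAST k. has_walk V adj u v k)"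

definition distance_matrix :: "'a set \<Rightarrow> ('a \<Rightarrow> 'a \<Rightarrow> bool) \<Rightarrow> 'a \<Rightarrow> 'a \<Rightarrow> real" where
  "distance_matrix V adj u v = real (graph_dist V adj u v)"

definition is_eigenvalue_on :: "'a set \<Rightarrow> ('a \<Rightarrow> 'a \<Rightarrow> real) \<Rightarrow> real \<Rightarrow> bool" where
  "is_eigenvalue_on V M \<mu> \<longleftrightarrow>
     (\<exists>x :: 'a \<Rightarrow> real. (\<exists>v\<in>V. x v \<noteq> 0) \<and>
        (\<forall>u\<in>V. (\<Sum>w\<in>V. M u w * x w) = \<mu> * x u))"

definition distance_eigenvalues :: "'a set \<Rightarrow> ('a \<Rightarrow> 'a \<Rightarrow> bool) \<Rightarrow> real set" where
  "distance_eigenvalues V adj = {\<mu>. is_eigenvalue_on V (distance_matrix V adj) \<mu>}"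

definition complete_verts :: "nat \<Rightarrow> nat set" where
  "complete_verts n = {0..<n}"
definition complete_adj :: "nat \<Rightarrow> nat \<Rightarrow> bool" where
  "complete_adj a b \<longleftrightarrow> a \<noteq> b"

definition hamming_verts :: "nat \<Rightarrow> nat \<Rightarrow> nat list set" where
  "hamming_verts d q = {xs. length xs = d \<and> set xs \<subseteq> {0..<q}}"
definition hamming_adj :: "nat list \<Rightarrow> nat list \<Rightarrow> bool" where
  "hamming_adj xs ys \<longleftrightarrow> length xs = length ys \<and>
     card {i. i < length xs \<and> xs ! i \<noteq> ys ! i} = 1"

definition kron_adj :: "('a \<Rightarrow> 'a \<Rightarrow> bool) \<Rightarrow> ('b \<Rightarrow> 'b \<Rightarrow> bool) \<Rightarrow> 'a \<times> 'b \<Rightarrow> 'a \<times> 'b \<Rightarrow> bool" where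
  "kron_adj adjG adjH p r \<longleftrightarrow> adjG (fst p) (fst r) \<and> adjH (snd p) (snd r)"

end

theory Submission
  imports Defs
begin

lemma has_walk_0: "has_walk V adj u v 0 \<longleftrightarrow> u = v \<and> u \<in> V"
  unfolding has_walk_def by auto

lemma has_walk_Suc:
  "has_walk V adj u v (Suc k) \<longleftrightarrow> u \<in> V \<and> (\<exists>w. adj u w \<and> has_walk V adj w v k)"
proof
  assume "has_walk V adj u v (Suc k)"
  then obtain p where p: "p 0 = u" "p (Suc k) = v" "\<forall>i\<le>Suc k. p i \<in> V"
    "\<forall>i<Suc k. adj (p i) (p (Suc i))" unfolding has_walk_def by blast
  have "has_walk V adj (p 1) v k" unfolding has_walk_def
    by (rule exI[of _ "p \<circ> Suc"]) (use p in auto)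
  moreover have "adj u (p 1)" using p by force
  ultimately show "u \<in> V \<and> (\<exists>w. adj u w \<and> has_walk V adj w v k)" using p by force
next
  assume "u \<in> V \<and> (\<exists>w. adj u w \<and> has_walk V adj w v k)"
  then obtain w p where u: "u \<in> V" "adj u w" and p: "p 0 = w" "p k = v" "\<forall>i\<le>k. p i \<in> V"
    "\<forall>i<k. adj (p i) (p (Suc i))" unfolding has_walk_def by blast
  show "has_walk V adj u v (Suc k)" unfolding has_walk_def
  proof (rule exI[of _ "\<lambda>i. if i = 0 then u else p (i - 1)"], intro conjI allI impI)
    fix i assume "i \<le> Suc k" then show "(if i = 0 then u else p (i - 1)) \<in> V"
      using u p by auto
  next
    fix i assume i: "i < Suc k"
    show "adj (if i = 0 then u else p (i - 1)) (if Suc i = 0 then u else p (Suc i - 1))"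
    proof (cases i)
      case 0 then show ?thesis using u p by auto
    next
      case (Suc j) then show ?thesis using p i by auto
    qed
  qed (use p in auto)
qed

lemma has_walk_1: "has_walk V adj u v 1 \<longleftrightarrow> u \<in> V \<and> v \<in> V \<and> adj u v"
  using has_walk_Suc[of V adj u v 0] by (auto simp: has_walk_0)

lemma has_walk_1' [simp]: "has_walk V adj u v (Suc 0) \<longleftrightarrow> u \<in> V \<and> v \<in> V \<and> adj u v"
  using has_walk_1 by simp

lemma has_walk_trans:
  "has_walk V adj u v k \<Longrightarrow> has_walk V adj v w m \<Longrightarrow> has_walk V adj u w (k + m)"
  by (induction k arbitrary: u) (auto simp: has_walk_0 has_walk_Suc)

lemma has_walk_V: "has_walk V adj u v k \<Longrightarrow> u \<in> V \<and> v \<in> V"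
  unfolding has_walk_def by force

lemma kron_walk:
  "has_walk (A \<times> B) (kron_adj f g) (a, x) (b, y) k \<longleftrightarrow>
   has_walk A f a b k \<and> has_walk B g x y k"
proof (induction k arbitrary: a x)
  case 0 then show ?case by (auto simp: has_walk_0)
next
  case (Suc k)
  show ?case
  proof
    assume "has_walk (A \<times> B) (kron_adj f g) (a, x) (b, y) (Suc k)"
    then obtain w1 w2 where "(a,x) \<in> A \<times> B" "kron_adj f g (a,x) (w1,w2)"
       "has_walk (A \<times> B) (kron_adj f g) (w1,w2) (b, y) k" by (auto simp: has_walk_Suc)
    then show "has_walk A f a b (Suc k) \<and> has_walk B g x y (Suc k)"
      using Suc.IH[of w1 w2] by (auto simp: has_walk_Suc kron_adj_def)
  next
    assume "has_walk A f a b (Suc k) \<and> has_walk B g x y (Suc k)"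
    then obtain w1 w2 where "a \<in> A" "x \<in> B" "f a w1" "g x w2" "has_walk A f w1 b k"
      "has_walk B g w2 y k" by (auto simp: has_walk_Suc)
    then show "has_walk (A \<times> B) (kron_adj f g) (a, x) (b, y) (Suc k)"
    proof -
      have "kron_adj f g (a,x) (w1,w2)" using \<open>f a w1\<close> \<open>g x w2\<close> by (simp add: kron_adj_def)
      moreover have "has_walk (A \<times> B) (kron_adj f g) (w1,w2) (b, y) k"
        using Suc.IH[of w1 w2] \<open>has_walk A f w1 b k\<close> \<open>has_walk B g w2 y k\<close> by blast
      ultimately show ?thesis using \<open>a \<in> A\<close> \<open>x \<in> B\<close> unfolding has_walk_Suc by blast
    qed
  qed
qed

lemma complete_walk:
  assumes "n \<ge> 3" "a < n" "b < n" "k \<ge> 2 \<or> (k \<ge> 1 \<and> a \<noteq> b)"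
  shows "has_walk (complete_verts n) complete_adj a b k"
  using assms(2-4)
proof (induction k arbitrary: a)
  case 0 then show ?case by simp
next
  case (Suc k)
  show ?case
  proof (cases "k = 0")
    case True then show ?thesis using Suc.prems
      by (auto simp: has_walk_Suc has_walk_0 complete_verts_def complete_adj_def)
  next
    case False
    obtain w where w: "w < n" "w \<noteq> a" "w \<noteq> b"
    proof
      let ?w = "if a \<noteq> 0 \<and> b \<noteq> 0 then 0 else if a \<noteq> 1 \<and> b \<noteq> 1 then 1 else (2::nat)"
      show "?w < n" "?w \<noteq> a" "?w \<noteq> b" using assms(1) by auto
    qed
    then have "has_walk (complete_verts n) complete_adj w b k" using Suc False by auto
    moreover have "complete_adj a w" using w by (simp add: complete_adj_def)
    ultimately show ?thesis using Suc.prems unfolding has_walk_Suc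
      by (auto simp: complete_verts_def)
  qed
qed


fun hdist :: "nat list \<Rightarrow> nat list \<Rightarrow> nat" where
  "hdist (x#xs) (y#ys) = (if x = y then 0 else 1) + hdist xs ys"
| "hdist _ _ = 0"

lemma hdist_filter: "length xs = length ys \<Longrightarrow>
  hdist xs ys = length (filter (\<lambda>(a,b). a \<noteq> b) (zip xs ys))"
  by (induction xs ys rule: list_induct2) auto

lemma hdist_card: "length xs = length ys \<Longrightarrow>
  card {i. i < length xs \<and> xs ! i \<noteq> ys ! i} = hdist xs ys"
proof -
  assume l: "length xs = length ys"
  have "{i. i < length xs \<and> xs ! i \<noteq> ys ! i} =
        {i. i < length (zip xs ys) \<and> (\<lambda>(a,b). a \<noteq> b) (zip xs ys ! i)}"
    using l by auto
  then show ?thesis using l by (simp only: hdist_filter length_filter_conv_card)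
qed

lemma hamming_adj_hdist: "hamming_adj xs ys \<longleftrightarrow> length xs = length ys \<and> hdist xs ys = 1"
  unfolding hamming_adj_def using hdist_card by metis

lemma hdist_0: "length xs = length ys \<Longrightarrow> hdist xs ys = 0 \<longleftrightarrow> xs = ys"
  by (induction xs ys rule: list_induct2) auto

lemma hdist_self [simp]: "hdist x x = 0"
  by (induction x) auto

lemma hdist_sym: "hdist xs ys = hdist ys xs"
  by (induction xs ys rule: hdist.induct) auto

lemma hdist_tri: "length x = length z \<Longrightarrow> length z = length y \<Longrightarrow>
   hdist x y \<le> hdist x z + hdist z y"
proof (induction x arbitrary: y z)
  case Nil then show ?case by simp
next
  case (Cons a x)
  then obtain c z' b y' where "z = c # z'" "y = b # y'"
    by (metis length_Suc_conv)
  then show ?case using Cons.IH[of z' y'] Cons.prems by auto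
qed

lemma hamming_verts_Suc: "hamming_verts (Suc d) q =
   (\<lambda>(c,xs). c # xs) ` ({0..<q} \<times> hamming_verts d q)"
proof (rule set_eqI, rule iffI)
  fix zs assume "zs \<in> hamming_verts (Suc d) q"
  then obtain c xs where "zs = c # xs" "c < q" "xs \<in> hamming_verts d q"
    unfolding hamming_verts_def by (cases zs) auto
  then show "zs \<in> (\<lambda>(c,xs). c # xs) ` ({0..<q} \<times> hamming_verts d q)"
    by (auto intro!: image_eqI[of _ _ "(c, xs)"])
qed (auto simp: hamming_verts_def)

lemma finite_hamming_verts: "finite (hamming_verts d q)"
proof (induction d)
  case 0 then show ?case by (simp add: hamming_verts_def)
next
  case (Suc d) then show ?case by (simp add: hamming_verts_Suc)
qed

lemma hamming_verts_0: "hamming_verts 0 q = {[]}"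
  unfolding hamming_verts_def by auto

lemma sum_hamming_Suc: "(\<Sum>zs\<in>hamming_verts (Suc d) q. F zs) =
   (\<Sum>c<q. \<Sum>xs\<in>hamming_verts d q. F (c # xs))"
proof -
  have inj: "inj_on (\<lambda>(c,xs). c # xs) ({0..<q} \<times> hamming_verts d q)"
    by (auto simp: inj_on_def)
  have "(\<Sum>zs\<in>hamming_verts (Suc d) q. F zs) = (\<Sum>p\<in>{0..<q} \<times> hamming_verts d q. F (fst p # snd p))"
    unfolding hamming_verts_Suc by (subst sum.reindex[OF inj]) (simp add: case_prod_beta)
  also have "\<dots> = (\<Sum>c\<in>{0..<q}. \<Sum>xs\<in>hamming_verts d q. F (c # xs))"
    by (simp add: sum.cartesian_product case_prod_beta)
  finally show ?thesis by (simp add: atLeast0LessThan)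
qed

lemma Cons_in_hamming: "c # xs \<in> hamming_verts (Suc d) q \<longleftrightarrow> c < q \<and> xs \<in> hamming_verts d q"
  unfolding hamming_verts_def by auto

lemma hamming_len: "xs \<in> hamming_verts d q \<Longrightarrow> length xs = d"
  unfolding hamming_verts_def by auto

lemma hamming_Suc_cases:
  assumes "xs \<in> hamming_verts (Suc d) q"
  obtains c ys where "xs = c # ys" "c < q" "ys \<in> hamming_verts d q"
  using assms unfolding hamming_verts_def by (cases xs) auto

lemma walk_lower:
  "has_walk (hamming_verts d q) hamming_adj x y k \<Longrightarrow> hdist x y \<le> k"
proof (induction k arbitrary: x)
  case 0 then show ?case by (simp add: has_walk_0)
next
  case (Suc k)
  then obtain w where w: "x \<in> hamming_verts d q" "hamming_adj x w"
    "has_walk (hamming_verts d q) hamming_adj w y k" by (auto simp: has_walk_Suc)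
  have "hdist w y \<le> k" using Suc.IH w(3) .
  moreover have "y \<in> hamming_verts d q" using has_walk_V[OF w(3)] by simp
  moreover have "w \<in> hamming_verts d q" using has_walk_V[OF w(3)] by simp
  ultimately show ?case using hdist_tri[of x w y] w by (auto simp: hamming_adj_hdist hamming_len)
qed

lemma adj_Cons: "hamming_adj (c # xs) (c' # ys) \<longleftrightarrow> length xs = length ys \<and>
   ((c \<noteq> c' \<and> xs = ys) \<or> (c = c' \<and> hamming_adj xs ys))"
  by (auto simp: hamming_adj_hdist hdist_0)

lemma walk_lift:
  "has_walk (hamming_verts d q) hamming_adj xs ys k \<Longrightarrow> c < q \<Longrightarrow>
   has_walk (hamming_verts (Suc d) q) hamming_adj (c # xs) (c # ys) k"
proof (induction k arbitrary: xs)
  case 0 then show ?case by (auto simp: has_walk_0 Cons_in_hamming)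
next
  case (Suc k)
  then obtain w where w: "xs \<in> hamming_verts d q" "hamming_adj xs w"
    "has_walk (hamming_verts d q) hamming_adj w ys k" by (auto simp: has_walk_Suc)
  have "hamming_adj (c # xs) (c # w)" using w(2) by (simp add: adj_Cons hamming_adj_hdist)
  then show ?case using Suc.IH[OF w(3) Suc.prems(2)] w(1) Suc.prems(2)
    unfolding has_walk_Suc by (auto simp: Cons_in_hamming)
qed

lemma walk_hdist:
  "x \<in> hamming_verts d q \<Longrightarrow> y \<in> hamming_verts d q \<Longrightarrow>
   has_walk (hamming_verts d q) hamming_adj x y (hdist x y)"
proof (induction d arbitrary: x y)
  case 0 then show ?case by (simp add: hamming_verts_0 has_walk_0)
next
  case (Suc d)
  obtain c xs where x: "x = c # xs" "c < q" "xs \<in> hamming_verts d q"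
    using Suc.prems(1) by (rule hamming_Suc_cases)
  obtain c' ys where y: "y = c' # ys" "c' < q" "ys \<in> hamming_verts d q"
    using Suc.prems(2) by (rule hamming_Suc_cases)
  have W: "has_walk (hamming_verts (Suc d) q) hamming_adj (c' # xs) (c' # ys) (hdist xs ys)"
    using walk_lift[OF Suc.IH[OF x(3) y(3)] y(2)] .
  show ?case
  proof (cases "c = c'")
    case True then show ?thesis using W x y by simp
  next
    case False
    have "has_walk (hamming_verts (Suc d) q) hamming_adj (c # xs) (c' # xs) 1"
      using False x y by (simp add: adj_Cons Cons_in_hamming hamming_len)
    from has_walk_trans[OF this W] show ?thesis using x y False by simp
  qed
qed

lemma walk2_self:
  assumes "d \<ge> 1" "q \<ge> 2" "x \<in> hamming_verts d q"
  shows "has_walk (hamming_verts d q) hamming_adj x x 2"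
proof -
  obtain d' where d: "d = Suc d'" using assms(1) by (cases d) auto
  obtain c xs where x: "x = c # xs" "c < q" "xs \<in> hamming_verts d' q"
    using assms(3) unfolding d by (rule hamming_Suc_cases)
  define c' where "c' = (if c = 0 then 1 else (0::nat))"
  have c': "c' < q" "c' \<noteq> c" using assms(2) by (auto simp: c'_def)
  have "has_walk (hamming_verts d q) hamming_adj (c # xs) (c' # xs) 1"
       "has_walk (hamming_verts d q) hamming_adj (c' # xs) (c # xs) 1"
    using x c' by (auto simp: has_walk_1 adj_Cons d Cons_in_hamming)
  from has_walk_trans[OF this] show ?thesis using x by (simp add: numeral_2_eq_2)
qed

lemma walk2_adj:
  assumes "q \<ge> 3" "x \<in> hamming_verts d q" "y \<in> hamming_verts d q" "hdist x y = 1"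
  shows "has_walk (hamming_verts d q) hamming_adj x y 2"
  using assms(2-4)
proof (induction d arbitrary: x y)
  case 0 then show ?case by (simp add: hamming_verts_0)
next
  case (Suc d)
  obtain c xs where x: "x = c # xs" "c < q" "xs \<in> hamming_verts d q"
    using Suc.prems(1) by (rule hamming_Suc_cases)
  obtain c' ys where y: "y = c' # ys" "c' < q" "ys \<in> hamming_verts d q"
    using Suc.prems(2) by (rule hamming_Suc_cases)
  have len: "length xs = length ys" using x y by (simp add: hamming_len)
  show ?case
  proof (cases "c = c'")
    case True
    then have "hdist xs ys = 1" using Suc.prems x y by simp
    from walk_lift[OF Suc.IH[OF x(3) y(3) this] x(2)] show ?thesis using x y True by simp
  next
    case False
    then have "hdist xs ys = 0" using Suc.prems x y by simp
    then have eq: "xs = ys" using hdist_0[OF len] by simp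
    define e where "e = (if c \<noteq> 0 \<and> c' \<noteq> 0 then 0 else if c \<noteq> 1 \<and> c' \<noteq> 1 then 1 else (2::nat))"
    have e: "e < q" "e \<noteq> c" "e \<noteq> c'" using assms(1) by (auto simp: e_def)
    have "has_walk (hamming_verts (Suc d) q) hamming_adj (c # xs) (e # xs) 1"
         "has_walk (hamming_verts (Suc d) q) hamming_adj (e # xs) (c' # xs) 1"
      using x y e False by (auto simp: has_walk_1 adj_Cons Cons_in_hamming)
    from has_walk_trans[OF this] show ?thesis using x y eq by (simp add: numeral_2_eq_2)
  qed
qed


lemma dist_formula:
  assumes "n \<ge> 3" "d \<ge> 1" "q \<ge> 3" "a < n" "b < n"
    "x \<in> hamming_verts d q" "y \<in> hamming_verts d q"
  shows "graph_dist (complete_verts n \<times> hamming_verts d q) (kron_adj complete_adj hamming_adj) (a,x) (b,y)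
     = hdist x y + (if a = b \<and> hdist x y = 1 then 1 else 0) + (if a \<noteq> b \<and> x = y then 2 else 0)"
    (is "graph_dist ?V ?A _ _ = ?D")
proof -
  have len: "length x = length y" using assms(6,7) by (simp add: hamming_len)
  have h0: "hdist x y = 0 \<longleftrightarrow> x = y" using hdist_0[OF len] .
  have ex: "has_walk ?V ?A (a,x) (b,y) ?D"
    unfolding kron_walk
  proof (cases "a = b")
    case True
    show "has_walk (complete_verts n) complete_adj a b ?D \<and> has_walk (hamming_verts d q) hamming_adj x y ?D"
    proof (cases "x = y")
      case True then show ?thesis using \<open>a = b\<close> assms by (simp add: has_walk_0 complete_verts_def)
    next
      case False
      show ?thesis
      proof (cases "hdist x y = 1")
        case True then show ?thesis using \<open>a = b\<close> assms walk2_adj[of q x d y] complete_walk[of n a b 2]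
          by (simp add: numeral_2_eq_2)
      next
        case False
        then have "hdist x y \<ge> 2" using h0 \<open>x \<noteq> y\<close> by linarith
        then show ?thesis using \<open>a = b\<close> False assms walk_hdist complete_walk by simp
      qed
    qed
  next
    case False
    show "has_walk (complete_verts n) complete_adj a b ?D \<and> has_walk (hamming_verts d q) hamming_adj x y ?D"
    proof (cases "x = y")
      case True then show ?thesis using \<open>a \<noteq> b\<close> assms walk2_self[of d q y] complete_walk[of n a b 2]
        by (simp add: numeral_2_eq_2)
    next
      case False
      then have "hdist x y \<ge> 1" using h0 by linarith
      then show ?thesis using \<open>a \<noteq> b\<close> False assms walk_hdist complete_walk by simp
    qed
  qed
  have lb: "?D \<le> k" if w: "has_walk ?V ?A (a,x) (b,y) k" for k
  proof -
    have wK: "has_walk (complete_verts n) complete_adj a b k"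
      and wH: "has_walk (hamming_verts d q) hamming_adj x y k" using w unfolding kron_walk by auto
    have hk: "hdist x y \<le> k" using walk_lower[OF wH] .
    have k0: "k = 0 \<Longrightarrow> a = b \<and> x = y" using wK wH by (simp add: has_walk_0)
    have k1: "k = 1 \<Longrightarrow> a \<noteq> b \<and> hdist x y = 1" using wK wH
      by (simp add: complete_adj_def hamming_adj_hdist)
    show ?thesis
    proof (cases "k \<le> 1")
      case True
      then have "k = 0 \<or> k = 1" by auto
      then show ?thesis using k0 k1 hk by auto
    next
      case False then show ?thesis using hk by auto
    qed
  qed
  show ?thesis unfolding graph_dist_def
    by (rule Least_equality[where P="\<lambda>k. has_walk ?V ?A (a,x) (b,y) k", OF ex lb])
qed


definition Gset :: "nat \<Rightarrow> (nat \<Rightarrow> real) set" where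
  "Gset m = insert (\<lambda>_. 1) {\<lambda>x. (if x = c then 1 else 0) - (if x = a then 1 else 0) | c a. c < m \<and> a < m \<and> c \<noteq> a}"

fun prodf :: "(nat \<Rightarrow> real) list \<Rightarrow> nat list \<Rightarrow> real" where
  "prodf [] xs = 1"
| "prodf (\<phi> # \<phi>s) xs = \<phi> (hd xs) * prodf \<phi>s (tl xs)"

definition cnt :: "(nat \<Rightarrow> real) list \<Rightarrow> nat" where
  "cnt \<phi>s = length (filter (\<lambda>\<phi>. \<phi> \<noteq> (\<lambda>_. 1)) \<phi>s)"

definition muH :: "nat \<Rightarrow> nat \<Rightarrow> nat \<Rightarrow> real" where
  "muH q d i = (if i = 0 then real d * real q ^ (d - 1) * (real q - 1)
               else if i = 1 then - (real q ^ (d - 1)) else 0)"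

definition lamH :: "nat \<Rightarrow> nat \<Rightarrow> nat \<Rightarrow> real" where
  "lamH q d i = real d * (real q - 1) - real q * real i"

lemma Gset_sum: "\<phi> \<in> Gset m \<Longrightarrow> (\<Sum>c<m. \<phi> c) = (if \<phi> = (\<lambda>_. 1) then real m else 0)"
proof -
  assume "\<phi> \<in> Gset m"
  then consider "\<phi> = (\<lambda>_. 1)" | c a where "c < m" "a < m" "c \<noteq> a"
     "\<phi> = (\<lambda>x. (if x = c then 1 else 0) - (if x = a then 1 else 0))"
    unfolding Gset_def by blast
  then show ?thesis
  proof cases
    case 1 then show ?thesis by simp
  next
    case 2
    have ne: "\<phi> \<noteq> (\<lambda>_. 1)"
    proof
      assume "\<phi> = (\<lambda>_. 1)"
      then have "\<phi> a = 1" by simp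
      then show False using 2 by simp
    qed
    have "(\<Sum>x<m. \<phi> x) = (\<Sum>x<m. (if x = c then 1 else 0)) - (\<Sum>x<m. (if x = a then 1 else 0::real))"
      unfolding 2(4) by (simp add: sum_subtractf)
    also have "\<dots> = 0" using 2 by simp
    finally show ?thesis using ne by simp
  qed
qed

lemma cnt_Cons: "cnt (\<phi> # \<phi>s) = (if \<phi> = (\<lambda>_. 1) then cnt \<phi>s else Suc (cnt \<phi>s))"
  by (simp add: cnt_def)

lemma cnt_le: "cnt \<phi>s \<le> length \<phi>s"
  by (simp add: cnt_def)

lemma cnt0_prodf: "cnt \<phi>s = 0 \<Longrightarrow> prodf \<phi>s xs = 1"
  by (induction \<phi>s arbitrary: xs) (auto simp: cnt_Cons split: if_splits)

lemma sum_minus_one: "c < (q::nat) \<Longrightarrow> (\<Sum>c'<q. (if c = c' then 0 else 1) * (f c' :: real)) = (\<Sum>c'<q. f c') - f c"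
proof -
  assume c: "c < q"
  have "(\<Sum>c'<q. f c') = (\<Sum>c'<q. (if c = c' then 0 else 1) * f c') + (\<Sum>c'<q. (if c = c' then f c' else 0))"
    by (subst sum.distrib[symmetric]) (rule sum.cong, auto)
  also have "(\<Sum>c'<q. (if c = c' then f c' else 0)) = f c" using c by (simp add: sum.delta' lessThan_iff)
  finally show ?thesis by simp
qed


lemma sum_sum_split:
  fixes A :: "nat \<Rightarrow> real" and B E :: "nat list \<Rightarrow> real"
  shows "(\<Sum>c'<q. \<Sum>ys\<in>Y. A c' * B ys + C c' * E ys) = (\<Sum>c'<q. A c') * (\<Sum>ys\<in>Y. B ys) + (\<Sum>c'<q. C c') * (\<Sum>ys\<in>Y. E ys)"
  by (simp only: sum_product sum.distrib)

lemma eig_H: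
  assumes "set \<phi>s \<subseteq> Gset q"
  shows "(\<Sum>y\<in>hamming_verts (length \<phi>s) q. prodf \<phi>s y) = (if cnt \<phi>s = 0 then real q ^ length \<phi>s else 0)
    \<and> (\<forall>x\<in>hamming_verts (length \<phi>s) q.
         (\<Sum>y\<in>hamming_verts (length \<phi>s) q. (if hdist x y = 1 then 1 else 0) * prodf \<phi>s y)
            = lamH q (length \<phi>s) (cnt \<phi>s) * prodf \<phi>s x)
    \<and> (\<forall>x\<in>hamming_verts (length \<phi>s) q.
         (\<Sum>y\<in>hamming_verts (length \<phi>s) q. real (hdist x y) * prodf \<phi>s y)
            = muH q (length \<phi>s) (cnt \<phi>s) * prodf \<phi>s x)"
  using assms
proof (induction \<phi>s)
  case Nil then show ?case by (simp add: hamming_verts_0 cnt_def lamH_def muH_def)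
next
  case (Cons \<phi> \<phi>s)
  define d where "d = length \<phi>s"
  define H where "H = hamming_verts d q"
  define g where "g = prodf \<phi>s"
  define s where "s = (\<Sum>c<q. \<phi> c)"
  define S where "S = (\<Sum>y\<in>H. g y)"
  define i where "i = cnt \<phi>s"
  have phi: "\<phi> \<in> Gset q" using Cons.prems by simp
  have IH: "S = (if i = 0 then real q ^ d else 0)"
    "\<And>x. x \<in> H \<Longrightarrow> (\<Sum>y\<in>H. (if hdist x y = 1 then 1 else 0) * g y) = lamH q d i * g x"
    "\<And>x. x \<in> H \<Longrightarrow> (\<Sum>y\<in>H. real (hdist x y) * g y) = muH q d i * g x"
    using Cons.IH Cons.prems unfolding S_def H_def g_def d_def i_def by auto
  have s: "s = (if \<phi> = (\<lambda>_. 1) then real q else 0)" using Gset_sum[OF phi] s_def by simp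
  have id: "i \<le> d" using cnt_le unfolding i_def d_def .
  have fin: "finite H" unfolding H_def by (rule finite_hamming_verts)
  have A: "(\<Sum>y\<in>hamming_verts (Suc d) q. prodf (\<phi> # \<phi>s) y) = s * S"
    unfolding sum_hamming_Suc by (simp add: s_def S_def H_def g_def sum_product)
  have B: "(\<Sum>y\<in>hamming_verts (Suc d) q. (if hdist x y = 1 then 1 else 0) * prodf (\<phi> # \<phi>s) y)
     = (s - \<phi> (hd x)) * prodf \<phi>s (tl x) + \<phi> (hd x) * (lamH q d i * prodf \<phi>s (tl x))"
    if x: "x \<in> hamming_verts (Suc d) q" for x
  proof -
    obtain c xs where cx: "x = c # xs" "c < q" "xs \<in> H"
      using x unfolding H_def by (rule hamming_Suc_cases)
    have pw: "(if hdist (c # xs) (c' # ys) = 1 then 1 else 0) * (\<phi> c' * g ys)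
       = ((if c = c' then 0 else 1) * \<phi> c') * (if ys = xs then g ys else 0)
         + (if c = c' then \<phi> c' else 0) * ((if hdist xs ys = 1 then 1 else 0) * g ys)"
      if ys: "ys \<in> H" for c' ys
    proof -
      have "length xs = length ys" using ys cx(3) unfolding H_def by (simp add: hamming_len)
      then have "hdist xs ys = 0 \<longleftrightarrow> ys = xs" using hdist_0 by metis
      then show ?thesis by auto
    qed
    have "(\<Sum>y\<in>hamming_verts (Suc d) q. (if hdist x y = 1 then 1 else 0) * prodf (\<phi> # \<phi>s) y)
      = (\<Sum>c'<q. \<Sum>ys\<in>H. (if hdist (c # xs) (c' # ys) = 1 then 1 else 0) * (\<phi> c' * g ys))"
      unfolding sum_hamming_Suc cx(1) H_def g_def by simp
    also have "\<dots> = (\<Sum>c'<q. \<Sum>ys\<in>H. ((if c = c' then 0 else 1) * \<phi> c') * (if ys = xs then g ys else 0)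
         + (if c = c' then \<phi> c' else 0) * ((if hdist xs ys = 1 then 1 else 0) * g ys))"
      using pw by (intro sum.cong refl) auto
    also have "\<dots> = (\<Sum>c'<q. (if c = c' then 0 else 1) * \<phi> c') * (\<Sum>ys\<in>H. (if ys = xs then g ys else 0))
        + (\<Sum>c'<q. (if c = c' then \<phi> c' else 0)) * (\<Sum>ys\<in>H. (if hdist xs ys = 1 then 1 else 0) * g ys)"
      by (rule sum_sum_split)
    also have "\<dots> = (s - \<phi> c) * g xs + \<phi> c * (lamH q d i * g xs)"
      using sum_minus_one[OF cx(2), of \<phi>] cx fin IH(2)[OF cx(3)]
      by (simp add: s_def sum.delta' sum.delta)
    finally show ?thesis using cx by (simp add: g_def algebra_simps)
  qed
  have C: "(\<Sum>y\<in>hamming_verts (Suc d) q. real (hdist x y) * prodf (\<phi> # \<phi>s) y)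
     = (s - \<phi> (hd x)) * S + s * (muH q d i * prodf \<phi>s (tl x))"
    if x: "x \<in> hamming_verts (Suc d) q" for x
  proof -
    obtain c xs where cx: "x = c # xs" "c < q" "xs \<in> H"
      using x unfolding H_def by (rule hamming_Suc_cases)
    have pw: "real (hdist (c # xs) (c' # ys)) * (\<phi> c' * g ys)
       = ((if c = c' then 0 else 1) * \<phi> c') * g ys + \<phi> c' * (real (hdist xs ys) * g ys)"
      for c' ys by (auto simp: algebra_simps)
    have "(\<Sum>y\<in>hamming_verts (Suc d) q. real (hdist x y) * prodf (\<phi> # \<phi>s) y)
      = (\<Sum>c'<q. \<Sum>ys\<in>H. real (hdist (c # xs) (c' # ys)) * (\<phi> c' * g ys))"
      unfolding sum_hamming_Suc cx(1) H_def g_def by simp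
    also have "\<dots> = (\<Sum>c'<q. \<Sum>ys\<in>H. ((if c = c' then 0 else 1) * \<phi> c') * g ys
         + \<phi> c' * (real (hdist xs ys) * g ys))"
      unfolding pw ..
    also have "\<dots> = (\<Sum>c'<q. (if c = c' then 0 else 1) * \<phi> c') * (\<Sum>ys\<in>H. g ys)
        + (\<Sum>c'<q. \<phi> c') * (\<Sum>ys\<in>H. real (hdist xs ys) * g ys)"
      by (rule sum_sum_split)
    also have "\<dots> = (s - \<phi> c) * S + s * (muH q d i * g xs)"
      using sum_minus_one[OF cx(2), of \<phi>] IH(3)[OF cx(3)]
      by (simp add: s_def S_def)
    finally show ?thesis using cx by (simp add: g_def)
  qed
  show ?case
  proof (cases "\<phi> = (\<lambda>_. 1)")
    case True
    have c: "cnt (\<phi> # \<phi>s) = i" using True by (simp add: cnt_Cons i_def)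
    have s1: "s = real q" using s True by simp
    show ?thesis
    proof (intro conjI ballI)
      show "(\<Sum>y\<in>hamming_verts (length (\<phi> # \<phi>s)) q. prodf (\<phi> # \<phi>s) y) =
            (if cnt (\<phi> # \<phi>s) = 0 then real q ^ length (\<phi> # \<phi>s) else 0)"
        using A c s1 IH(1) by (simp add: d_def)
    next
      fix x assume x: "x \<in> hamming_verts (length (\<phi> # \<phi>s)) q"
      show "(\<Sum>y\<in>hamming_verts (length (\<phi> # \<phi>s)) q. (if hdist x y = 1 then 1 else 0) * prodf (\<phi> # \<phi>s) y) =
         lamH q (length (\<phi> # \<phi>s)) (cnt (\<phi> # \<phi>s)) * prodf (\<phi> # \<phi>s) x"
        using B[of x] x c s1 True by (simp add: d_def lamH_def algebra_simps)
    next
      fix x assume x: "x \<in> hamming_verts (length (\<phi> # \<phi>s)) q"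
      have "(\<Sum>y\<in>hamming_verts (Suc d) q. real (hdist x y) * prodf (\<phi> # \<phi>s) y)
         = muH q (Suc d) i * prodf (\<phi> # \<phi>s) x"
      proof -
        have C': "(\<Sum>y\<in>hamming_verts (Suc d) q. real (hdist x y) * prodf (\<phi> # \<phi>s) y)
            = (real q - 1) * S + real q * (muH q d i * prodf \<phi>s (tl x))"
          using C[of x] x True s1 by (simp add: d_def)
        consider "i = 0" | "i = 1" | "i \<ge> 2" by linarith
        then show ?thesis
        proof cases
          case 1
          then have "prodf \<phi>s (tl x) = 1" using cnt0_prodf i_def by simp
          moreover have e: "muH q (Suc d) 0 = real q * muH q d 0 + (real q - 1) * real q ^ d"
            unfolding muH_def by (cases d) (auto simp: algebra_simps)
          moreover have "prodf (\<phi> # \<phi>s) x = 1" using \<open>prodf \<phi>s (tl x) = 1\<close> True by simp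
          ultimately show ?thesis using C' 1 IH(1) by (simp add: algebra_simps)
        next
          case 2
          then have "d \<ge> 1" using id by simp
          then have "real q * real q ^ (d - 1) = real q ^ d" by (cases d) auto
          then show ?thesis using C' 2 IH(1) True by (simp add: muH_def algebra_simps)
        next
          case 3 then show ?thesis using C' IH(1) True by (simp add: muH_def)
        qed
      qed
      then show "(\<Sum>y\<in>hamming_verts (length (\<phi> # \<phi>s)) q. real (hdist x y) * prodf (\<phi> # \<phi>s) y) =
         muH q (length (\<phi> # \<phi>s)) (cnt (\<phi> # \<phi>s)) * prodf (\<phi> # \<phi>s) x"
        using c by (simp add: d_def)
    qed
  next
    case False
    have c: "cnt (\<phi> # \<phi>s) = Suc i" using False by (simp add: cnt_Cons i_def)
    have s0: "s = 0" using s False by simp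
    show ?thesis
    proof (intro conjI ballI)
      show "(\<Sum>y\<in>hamming_verts (length (\<phi> # \<phi>s)) q. prodf (\<phi> # \<phi>s) y) =
            (if cnt (\<phi> # \<phi>s) = 0 then real q ^ length (\<phi> # \<phi>s) else 0)"
        using A c s0 by (simp add: d_def)
    next
      fix x assume x: "x \<in> hamming_verts (length (\<phi> # \<phi>s)) q"
      show "(\<Sum>y\<in>hamming_verts (length (\<phi> # \<phi>s)) q. (if hdist x y = 1 then 1 else 0) * prodf (\<phi> # \<phi>s) y) =
         lamH q (length (\<phi> # \<phi>s)) (cnt (\<phi> # \<phi>s)) * prodf (\<phi> # \<phi>s) x"
        using B[of x] x c s0 by (simp add: d_def lamH_def algebra_simps)
    next
      fix x assume x: "x \<in> hamming_verts (length (\<phi> # \<phi>s)) q"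
      have "(\<Sum>y\<in>hamming_verts (Suc d) q. real (hdist x y) * prodf (\<phi> # \<phi>s) y)
         = muH q (Suc d) (Suc i) * prodf (\<phi> # \<phi>s) x"
      proof -
        have C': "(\<Sum>y\<in>hamming_verts (Suc d) q. real (hdist x y) * prodf (\<phi> # \<phi>s) y)
            = - \<phi> (hd x) * S"
          using C[of x] x s0 by (simp add: d_def)
        show ?thesis
        proof (cases "i = 0")
          case True
          then have "prodf \<phi>s (tl x) = 1" using cnt0_prodf i_def by simp
          then show ?thesis using C' True IH(1) by (simp add: muH_def)
        next
          case False then show ?thesis using C' IH(1) by (simp add: muH_def)
        qed
      qed
      then show "(\<Sum>y\<in>hamming_verts (length (\<phi> # \<phi>s)) q. real (hdist x y) * prodf (\<phi> # \<phi>s) y) =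
         muH q (length (\<phi> # \<phi>s)) (cnt (\<phi> # \<phi>s)) * prodf (\<phi> # \<phi>s) x"
        using c by (simp add: d_def)
    qed
  qed
qed


lemma one_in_Gset: "(\<lambda>_. 1) \<in> Gset m" by (simp add: Gset_def)

lemma delta_in_Gset: "c < m \<Longrightarrow> a < m \<Longrightarrow> c \<noteq> a \<Longrightarrow>
  (\<lambda>x. (if x = c then 1 else 0) - (if x = a then 1 else 0)) \<in> Gset m"
  unfolding Gset_def by blast

lemma span1:
  assumes h: "\<forall>\<phi>\<in>Gset m. (\<Sum>c<m. H c * \<phi> c) = (0::real)" and c: "c < m"
  shows "H c = 0"
proof -
  have s: "(\<Sum>a<m. H a) = 0" using h one_in_Gset[of m] by auto
  have eq: "H a = H c" if a: "a < m" for a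
  proof (cases "a = c")
    case False
    have "(\<Sum>x<m. H x * ((if x = c then 1 else 0) - (if x = a then 1 else 0))) = 0"
      using h delta_in_Gset[OF c a] False by auto
    moreover have "(\<Sum>x<m. H x * ((if x = c then 1 else 0) - (if x = a then 1 else 0)))
       = (\<Sum>x<m. (if x = c then H x else 0)) - (\<Sum>x<m. (if x = a then H x else 0))"
      by (subst sum_subtractf[symmetric]) (rule sum.cong, auto)
    ultimately show ?thesis using a c by (simp add: sum.delta)
  qed simp
  have "(\<Sum>a<m. H a) = (\<Sum>a<m. H c)" using eq by (intro sum.cong) auto
  then have "real m * H c = 0" using s by simp
  then show ?thesis using c by simp
qed

lemma span_H:
  assumes "\<forall>\<phi>s. length \<phi>s = d \<and> set \<phi>s \<subseteq> Gset q \<longrightarrow> (\<Sum>y\<in>hamming_verts d q. F y * prodf \<phi>s y) = 0"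
    and "y \<in> hamming_verts d q"
  shows "F y = 0"
  using assms
proof (induction d arbitrary: F y)
  case 0
  then have "(\<Sum>y\<in>hamming_verts 0 q. F y * prodf [] y) = 0" by auto
  then show ?case using 0 by (simp add: hamming_verts_0)
next
  case (Suc d)
  obtain c ys where y: "y = c # ys" "c < q" "ys \<in> hamming_verts d q"
    using Suc.prems(2) by (rule hamming_Suc_cases)
  have Z: "(\<Sum>c'<q. F (c' # ys) * \<phi> c') = 0" if phi: "\<phi> \<in> Gset q" for \<phi>
  proof -
    let ?F = "\<lambda>ys. (\<Sum>c'<q. F (c' # ys) * \<phi> c')"
    have "\<forall>\<phi>s. length \<phi>s = d \<and> set \<phi>s \<subseteq> Gset q \<longrightarrow> (\<Sum>y\<in>hamming_verts d q. ?F y * prodf \<phi>s y) = 0"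
    proof (intro allI impI)
      fix \<phi>s assume a: "length \<phi>s = d \<and> set \<phi>s \<subseteq> Gset q"
      have "(\<Sum>y\<in>hamming_verts d q. ?F y * prodf \<phi>s y)
          = (\<Sum>c'<q. \<Sum>y\<in>hamming_verts d q. F (c' # y) * prodf (\<phi> # \<phi>s) (c' # y))"
        unfolding sum_distrib_right by (subst sum.swap) (simp add: mult_ac)
      also have "\<dots> = (\<Sum>z\<in>hamming_verts (Suc d) q. F z * prodf (\<phi> # \<phi>s) z)"
        by (rule sum_hamming_Suc[symmetric])
      also have "\<dots> = 0" using Suc.prems(1)[rule_format, of "\<phi> # \<phi>s"] a phi by (simp del: prodf.simps)
      finally show "(\<Sum>y\<in>hamming_verts d q. ?F y * prodf \<phi>s y) = 0" .
    qed
    from Suc.IH[OF this y(3)] show ?thesis .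
  qed
  have "\<forall>\<phi>\<in>Gset q. (\<Sum>c'<q. F (c' # ys) * \<phi> c') = 0" using Z by blast
  from span1[OF this y(2)] show ?case using y by simp
qed


definition Dm :: "nat \<times> nat list \<Rightarrow> nat \<times> nat list \<Rightarrow> real" where
  "Dm v w = real (hdist (snd v) (snd w)) + (if fst v = fst w \<and> hdist (snd v) (snd w) = 1 then 1 else 0)
       + (if fst v \<noteq> fst w \<and> snd v = snd w then 2 else 0)"

lemma Dm_sym: "Dm v w = Dm w v"
  unfolding Dm_def by (auto simp: hdist_sym)

lemma dm_eq:
  assumes "n \<ge> 3" "d \<ge> 1" "q \<ge> 3" "v \<in> complete_verts n \<times> hamming_verts d q"
    "w \<in> complete_verts n \<times> hamming_verts d q"
  shows "distance_matrix (complete_verts n \<times> hamming_verts d q) (kron_adj complete_adj hamming_adj) v w = Dm v w"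
proof -
  obtain a x b y where vw: "v = (a,x)" "w = (b,y)" by (cases v, cases w) auto
  show ?thesis using assms dist_formula[of n d q a b x y] unfolding vw distance_matrix_def Dm_def
    by (simp add: complete_verts_def)
qed

lemma sum3_split:
  fixes A C F :: "nat \<Rightarrow> real" and B E G :: "nat list \<Rightarrow> real"
  shows "(\<Sum>b<n. \<Sum>y\<in>Y. A b * B y + C b * E y + F b * G y) =
     (\<Sum>b<n. A b) * (\<Sum>y\<in>Y. B y) + (\<Sum>b<n. C b) * (\<Sum>y\<in>Y. E y) + (\<Sum>b<n. F b) * (\<Sum>y\<in>Y. G y)"
  by (simp only: sum_product sum.distrib)

lemma sum_prod_set: "(\<Sum>w\<in>complete_verts n \<times> Y. f w) = (\<Sum>b<n. \<Sum>y\<in>Y. f (b, y))"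
  by (simp add: complete_verts_def sum.cartesian_product atLeast0LessThan case_prod_beta)

definition theta :: "nat \<Rightarrow> nat \<Rightarrow> nat \<Rightarrow> (nat \<Rightarrow> real) \<Rightarrow> nat \<Rightarrow> real" where
  "theta n q d u i = (if u = (\<lambda>_. 1) then real n * muH q d i + lamH q d i + 2 * real n - 2
                      else lamH q d i - 2)"

lemma eig_prod:
  assumes u: "u \<in> Gset n" and phs: "set \<phi>s \<subseteq> Gset q" "length \<phi>s = d"
    and a: "a < n" and x: "x \<in> hamming_verts d q"
  shows "(\<Sum>w\<in>complete_verts n \<times> hamming_verts d q. Dm (a,x) w * (u (fst w) * prodf \<phi>s (snd w)))
     = theta n q d u (cnt \<phi>s) * (u a * prodf \<phi>s x)"
proof -
  define H where "H = hamming_verts d q"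
  define g where "g = prodf \<phi>s"
  define i where "i = cnt \<phi>s"
  have fin: "finite H" unfolding H_def by (rule finite_hamming_verts)
  have xH: "x \<in> H" using x H_def by simp
  have E: "(\<Sum>y\<in>H. (if hdist x y = 1 then 1 else 0) * g y) = lamH q d i * g x"
      "(\<Sum>y\<in>H. real (hdist x y) * g y) = muH q d i * g x"
    using eig_H[OF phs(1)] x unfolding phs(2) H_def g_def i_def by auto
  have pw: "Dm (a,x) (b,y) * (u b * g y) =
      u b * (real (hdist x y) * g y) + (if a = b then u b else 0) * ((if hdist x y = 1 then 1 else 0) * g y)
      + (2 * (if a = b then 0 else 1) * u b) * (if y = x then g y else 0)" if "y \<in> H" for b y
  proof -
    have "length x = length y" using that xH unfolding H_def by (simp add: hamming_len)
    then have "hdist x y = 0 \<longleftrightarrow> y = x" using hdist_0 by metis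
    then show ?thesis unfolding Dm_def by (auto simp: algebra_simps)
  qed
  have "(\<Sum>w\<in>complete_verts n \<times> H. Dm (a,x) w * (u (fst w) * g (snd w)))
     = (\<Sum>b<n. \<Sum>y\<in>H. Dm (a,x) (b,y) * (u b * g y))" by (simp add: sum_prod_set)
  also have "\<dots> = (\<Sum>b<n. \<Sum>y\<in>H. u b * (real (hdist x y) * g y) + (if a = b then u b else 0) * ((if hdist x y = 1 then 1 else 0) * g y)
      + (2 * (if a = b then 0 else 1) * u b) * (if y = x then g y else 0))"
    using pw by (intro sum.cong refl) auto
  also have "\<dots> = (\<Sum>b<n. u b) * (\<Sum>y\<in>H. real (hdist x y) * g y)
      + (\<Sum>b<n. (if a = b then u b else 0)) * (\<Sum>y\<in>H. (if hdist x y = 1 then 1 else 0) * g y)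
      + (\<Sum>b<n. 2 * (if a = b then 0 else 1) * u b) * (\<Sum>y\<in>H. (if y = x then g y else 0))"
    by (rule sum3_split)
  also have "(\<Sum>b<n. 2 * (if a = b then 0 else 1) * u b) = 2 * ((\<Sum>b<n. u b) - u a)"
    using sum_minus_one[OF a, of u] by (simp add: sum_distrib_left[symmetric] mult.assoc)
  also have "(\<Sum>b<n. u b) = (if u = (\<lambda>_. 1) then real n else 0)" using Gset_sum[OF u] .
  finally have R: "(\<Sum>w\<in>complete_verts n \<times> H. Dm (a,x) w * (u (fst w) * g (snd w)))
     = (if u = (\<lambda>_. 1) then real n else 0) * (muH q d i * g x) + u a * (lamH q d i * g x)
       + 2 * ((if u = (\<lambda>_. 1) then real n else 0) - u a) * g x"
    using E xH fin a by (simp add: sum.delta sum.delta')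
  show ?thesis
  proof (cases "u = (\<lambda>_. 1)")
    case True then show ?thesis using R unfolding theta_def H_def g_def i_def by (simp add: algebra_simps)
  next
    case False then show ?thesis using R unfolding theta_def H_def g_def i_def by (simp add: algebra_simps)
  qed
qed


lemma prodf_rep0: "(\<forall>\<phi>\<in>set \<phi>s. \<phi> 0 = 1) \<Longrightarrow> prodf \<phi>s (replicate (length \<phi>s) 0) = 1"
  by (induction \<phi>s) auto

lemma theta_eig:
  assumes "n \<ge> 3" "d \<ge> 1" "q \<ge> 3" "u \<in> Gset n" "u 0 = 1" "i \<le> d"
  shows "theta n q d u i \<in> distance_eigenvalues (complete_verts n \<times> hamming_verts d q)
                               (kron_adj complete_adj hamming_adj)"
proof -
  define g0 :: "nat \<Rightarrow> real" where "g0 = (\<lambda>x. (if x = 0 then 1 else 0) - (if x = 1 then 1 else 0))"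
  define \<phi>s where "\<phi>s = replicate i g0 @ replicate (d - i) (\<lambda>_. 1)"
  have g0: "g0 \<in> Gset q" unfolding g0_def using assms(3) by (intro delta_in_Gset) auto
  have g0ne: "g0 \<noteq> (\<lambda>_. 1)"
  proof
    assume "g0 = (\<lambda>_. 1)" then have "g0 1 = 1" by simp
    then show False by (simp add: g0_def)
  qed
  have set: "set \<phi>s \<subseteq> Gset q" using g0 one_in_Gset unfolding \<phi>s_def by auto
  have len: "length \<phi>s = d" using assms(6) unfolding \<phi>s_def by simp
  have cnt: "cnt \<phi>s = i" using g0ne unfolding \<phi>s_def cnt_def by simp
  have p1: "prodf \<phi>s (replicate d 0) = 1"
  proof -
    have "\<forall>\<phi>\<in>set \<phi>s. \<phi> 0 = 1" unfolding \<phi>s_def by (auto simp: g0_def)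
    then have "prodf \<phi>s (replicate (length \<phi>s) 0) = 1" by (rule prodf_rep0)
    then show ?thesis using len by simp
  qed
  define V where "V = complete_verts n \<times> hamming_verts d q"
  define P where "P = (\<lambda>w. u (fst w) * prodf \<phi>s (snd w))"
  have v0: "(0, replicate d 0) \<in> V" using assms unfolding V_def complete_verts_def hamming_verts_def by auto
  have "P (0, replicate d 0) \<noteq> 0" using p1 assms(5) by (simp add: P_def)
  moreover have "\<forall>v\<in>V. (\<Sum>w\<in>V. distance_matrix V (kron_adj complete_adj hamming_adj) v w * P w) = theta n q d u i * P v"
  proof
    fix v assume v: "v \<in> V"
    have "(\<Sum>w\<in>V. distance_matrix V (kron_adj complete_adj hamming_adj) v w * P w) = (\<Sum>w\<in>V. Dm (fst v, snd v) w * P w)"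
      using dm_eq[OF assms(1-3)] v unfolding V_def by (intro sum.cong) auto
    also have "\<dots> = theta n q d u i * P v"
      using eig_prod[OF assms(4) set len, of "fst v" "snd v"] v cnt
      unfolding V_def P_def by (auto simp: complete_verts_def)
    finally show "(\<Sum>w\<in>V. distance_matrix V (kron_adj complete_adj hamming_adj) v w * P w) = theta n q d u i * P v" .
  qed
  ultimately show ?thesis using v0 unfolding distance_eigenvalues_def is_eigenvalue_on_def V_def by blast
qed

theorem theorem4p7:
  fixes n d q :: nat
  assumes "n \<ge> 3" and "d \<ge> 1" and "q \<ge> 3"
  defines "lam \<equiv> (\<lambda>i::nat. real d * (real q - 1) - real q * real i)"
    and "t \<equiv> real d * real q ^ (d - 1) * (real q - 1)"
  shows "distance_eigenvalues (complete_verts n \<times> hamming_verts d q)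
                               (kron_adj complete_adj hamming_adj) =
           {2 * real n - 2 + real n * t + lam 0,
            2 * real n - 2 - real n * real q ^ (d - 1) + lam 1}
         \<union> {2 * real n - 2 + lam i | i. 2 \<le> i \<and> i \<le> d}
         \<union> {lam i - 2 | i. i \<le> d}" (is "?E = ?R")
proof -
  define V where "V = complete_verts n \<times> hamming_verts d q"
  define M where "M = distance_matrix V (kron_adj complete_adj hamming_adj)"
  have lamH: "lamH q d i = lam i" for i unfolding lamH_def lam_def by simp
  have thR: "theta n q d u i \<in> ?R" if "i \<le> d" for u i
  proof (cases "u = (\<lambda>_. 1)")
    case True
    consider "i = 0" | "i = 1" | "i \<ge> 2" by linarith
    then show ?thesis
    proof cases
      case 1 then show ?thesis using True unfolding theta_def muH_def lamH t_def by (auto simp: algebra_simps)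
    next
      case 2 then show ?thesis using True unfolding theta_def muH_def lamH by (auto simp: algebra_simps)
    next
      case 3 then show ?thesis using True that unfolding theta_def muH_def lamH by (auto simp: algebra_simps)
    qed
  next
    case False then show ?thesis using that unfolding theta_def lamH by auto
  qed
  define u0 :: "nat \<Rightarrow> real" where "u0 = (\<lambda>x. (if x = 0 then 1 else 0) - (if x = 1 then 1 else 0))"
  have u0: "u0 \<in> Gset n" "u0 0 = 1" unfolding u0_def using assms(1) by (auto intro!: delta_in_Gset)
  have u0ne: "u0 \<noteq> (\<lambda>_. 1)"
  proof
    assume "u0 = (\<lambda>_. 1)" then have "u0 1 = 1" by simp
    then show False by (simp add: u0_def)
  qed
  have one: "(\<lambda>_. 1) \<in> Gset n" by (rule one_in_Gset)
  have sup: "?R \<subseteq> ?E"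
  proof
    fix \<mu> assume "\<mu> \<in> ?R"
    then consider "\<mu> = 2 * real n - 2 + real n * t + lam 0" | "\<mu> = 2 * real n - 2 - real n * real q ^ (d - 1) + lam 1"
      | i where "2 \<le> i" "i \<le> d" "\<mu> = 2 * real n - 2 + lam i" | i where "i \<le> d" "\<mu> = lam i - 2"
      by blast
    then show "\<mu> \<in> ?E"
    proof cases
      case 1
      have "theta n q d (\<lambda>_. 1) 0 = \<mu>" unfolding 1 theta_def muH_def lamH t_def by simp
      then show ?thesis using theta_eig[OF assms(1-3) one _, of 0] by simp
    next
      case 2
      have "theta n q d (\<lambda>_. 1) 1 = \<mu>" unfolding 2 theta_def muH_def lamH by simp
      then show ?thesis using theta_eig[OF assms(1-3) one _, of 1] assms(2) by simp
    next
      case 3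
      have "theta n q d (\<lambda>_. 1) i = \<mu>" using 3 unfolding theta_def muH_def lamH by simp
      then show ?thesis using theta_eig[OF assms(1-3) one _, of i] 3 by simp
    next
      case 4
      have "theta n q d u0 i = \<mu>" using 4 u0ne unfolding theta_def lamH by simp
      then show ?thesis using theta_eig[OF assms(1-3) u0, of i] 4 by simp
    qed
  qed
  have sub: "?E \<subseteq> ?R"
  proof
    fix \<mu> assume "\<mu> \<in> ?E"
    then obtain X where X: "\<exists>v\<in>V. X v \<noteq> 0" "\<forall>v\<in>V. (\<Sum>w\<in>V. M v w * X w) = \<mu> * X v"
      unfolding distance_eigenvalues_def is_eigenvalue_on_def V_def M_def by blast
    show "\<mu> \<in> ?R"
    proof (rule ccontr)
      assume nR: "\<mu> \<notin> ?R"
      have finV: "finite V" unfolding V_def complete_verts_def by (simp add: finite_hamming_verts)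
      have Msym: "M v w = M w v" if "v \<in> V" "w \<in> V" for v w
        using dm_eq[OF assms(1-3)] that Dm_sym unfolding M_def V_def by metis
      have orth: "(\<Sum>v\<in>V. X v * (u (fst v) * prodf \<phi>s (snd v))) = 0"
        if u: "u \<in> Gset n" and phs: "set \<phi>s \<subseteq> Gset q" "length \<phi>s = d" for u \<phi>s
      proof -
        define P where "P = (\<lambda>w. u (fst w) * prodf \<phi>s (snd w))"
        define th where "th = theta n q d u (cnt \<phi>s)"
        have th: "th \<noteq> \<mu>" using thR[of "cnt \<phi>s" u] cnt_le[of \<phi>s] phs nR unfolding th_def by auto
        have eP: "(\<Sum>w\<in>V. M v w * P w) = th * P v" if v: "v \<in> V" for v
        proof -
          have "(\<Sum>w\<in>V. M v w * P w) = (\<Sum>w\<in>V. Dm (fst v, snd v) w * P w)"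
            using dm_eq[OF assms(1-3)] v unfolding V_def M_def by (intro sum.cong) auto
          also have "\<dots> = th * P v"
            using eig_prod[OF u phs, of "fst v" "snd v"] v
            unfolding V_def P_def th_def by (auto simp: complete_verts_def)
          finally show ?thesis .
        qed
        have "\<mu> * (\<Sum>v\<in>V. X v * P v) = (\<Sum>v\<in>V. (\<Sum>w\<in>V. M v w * X w) * P v)"
          using X(2) by (simp add: sum_distrib_left mult_ac)
        also have "\<dots> = (\<Sum>v\<in>V. \<Sum>w\<in>V. M v w * X w * P v)"
          by (simp add: sum_distrib_right)
        also have "\<dots> = (\<Sum>w\<in>V. \<Sum>v\<in>V. M v w * X w * P v)"
          by (rule sum.swap)
        also have "\<dots> = (\<Sum>w\<in>V. X w * (\<Sum>v\<in>V. M v w * P v))"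
          by (simp add: sum_distrib_left mult_ac)
        also have "\<dots> = (\<Sum>w\<in>V. X w * (\<Sum>v\<in>V. M w v * P v))"
          using Msym by (intro sum.cong refl) (auto intro!: arg_cong[where f="\<lambda>z. X _ * z"] sum.cong)
        also have "\<dots> = th * (\<Sum>v\<in>V. X v * P v)"
          using eP by (simp add: sum_distrib_left mult_ac)
        finally have "(\<mu> - th) * (\<Sum>v\<in>V. X v * P v) = 0" by (simp add: algebra_simps)
        then show ?thesis using th unfolding P_def by simp
      qed
      have "X v = 0" if v: "v \<in> V" for v
      proof -
        obtain a y where ay: "v = (a, y)" "a < n" "y \<in> hamming_verts d q"
          using v unfolding V_def complete_verts_def by auto
        have Fu: "(\<Sum>b<n. X (b, y) * u b) = 0" if u: "u \<in> Gset n" for u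
        proof -
          have "\<forall>\<phi>s. length \<phi>s = d \<and> set \<phi>s \<subseteq> Gset q \<longrightarrow>
              (\<Sum>y\<in>hamming_verts d q. (\<Sum>b<n. X (b, y) * u b) * prodf \<phi>s y) = 0"
          proof (intro allI impI)
            fix \<phi>s assume p: "length \<phi>s = d \<and> set \<phi>s \<subseteq> Gset q"
            have "(\<Sum>y\<in>hamming_verts d q. (\<Sum>b<n. X (b, y) * u b) * prodf \<phi>s y)
              = (\<Sum>v\<in>V. X v * (u (fst v) * prodf \<phi>s (snd v)))"
              unfolding V_def sum_prod_set sum_distrib_right by (subst sum.swap) (simp add: mult_ac)
            also have "\<dots> = 0" using orth[OF u] p by auto
            finally show "(\<Sum>y\<in>hamming_verts d q. (\<Sum>b<n. X (b, y) * u b) * prodf \<phi>s y) = 0" .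
          qed
          from span_H[OF this ay(3)] show ?thesis .
        qed
        have "\<forall>u\<in>Gset n. (\<Sum>b<n. X (b, y) * u b) = 0" using Fu by blast
        from span1[OF this ay(2)] show ?thesis using ay by simp
      qed
      then show False using X(1) by blast
    qed
  qed
  show ?thesis using sub sup by blast
qed

end
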